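(* Let $l$ be a prime, $\tilde\chi$ a Dirichlet character modulo $l$ with associated character $\chi$, and $f\in S_2^k(\Gamma_0^{(2)}(l),\chi)$. Let $s$ be a symmetric positive definite integral $2\times 2$ matrix with $l'=\det(s)$, $l\nmid l'$. Let $W_l=\begin{pmatrix}lx&y\\ ll'z&lw\end{pmatrix}$ with $x,y,z,w\in\mathbb{Z}$ and $\det W_l=l$ (so $\begin{pmatrix}x&y\\ l'z&lw\end{pmatrix}\in\mathrm{SL}_2(\mathbb{Z})$). Then \[W_l\,\phi_s^*f(\tau)=l^k\,\chi(l'z^2)\,\phi_{ls}^*(f|_{E_2})(\tau).\]
   Context: $\Gamma_0^{(2)}(l)=\{\begin{pmatrix}A&B\\C&D\end{pmatrix}\in \mathrm{Sp}_4(\mathbb{Z}) : C\equiv 0 \pmod l\}$; for $M=\begin{pmatrix}A&B\\C&D\end{pmatrix}$, $F|_kM(Z)=\det(CZ+D)^{-k}F((AZ+B)(CZ+D)^{-1})$ on the genus 2 Siegel upper half space; $\chi(M)=\tilde\chi(\det D)$, and for an integer $n$ prime to $l$, $\chi(n)=\tilde\chi(n)$. $S_2^k(\Gamma_0^{(2)}(l),\chi)$ is the space of Siegel cusp forms of degree 2, weight $k$ with $f|_kM=\chi(M)f$ for all $M\in\Gamma_0^{(2)}(l)$. $E_2=\begin{pmatrix}0&I_2\\-I_2&0\end{pmatrix}$. For a positive definite symmetric $2\times2$ matrix $s$ and a function $F$ on $\mathbb{H}_2$, $\phi_s^*(F)(\tau)=F(s\tau)$. For an elliptic form $g$ of weight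 $2k$ and $\gamma=\begin{pmatrix}a&b\\c&d\end{pmatrix}\in\mathrm{GL}_2^+(\mathbb{Q})$, $(g|\gamma)(\tau)=\det(\gamma)^k(c\tau+d)^{-2k}g(\gamma\tau)$, and $W_l g:=g|W_l$. *)

theory Defs
  imports "HOL-Analysis.Analysis"
begin

definition dirichlet_char :: "nat \<Rightarrow> (int \<Rightarrow> complex) \<Rightarrow> bool" where
  "dirichlet_char l chi \<longleftrightarrow> l > 0 \<and> chi 1 = 1 \<and>
     (\<forall>m n. chi (m * n) = chi m * chi n) \<and>
     (\<forall>n. chi (n + int l) = chi n) \<and>
     (\<forall>n. chi n = 0 \<longleftrightarrow> \<not> coprime n (int l))"

type_synonym cmat2 = "complex^2^2"
type_synonym imat2 = "int^2^2"

definition of_int_mat :: "imat2 \<Rightarrow> cmat2" where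
  "of_int_mat A = (\<chi> i j. of_int (A$i$j))"

definition Im_mat :: "cmat2 \<Rightarrow> real^2^2" where
  "Im_mat Z = (\<chi> i j. Im (Z$i$j))"

definition pos_def_real :: "real^2^2 \<Rightarrow> bool" where
  "pos_def_real Y \<longleftrightarrow> (\<forall>v. v \<noteq> 0 \<longrightarrow> v \<bullet> (Y *v v) > 0)"

definition pos_def_int :: "imat2 \<Rightarrow> bool" where
  "pos_def_int S \<longleftrightarrow> (\<forall>v::int^2. v \<noteq> 0 \<longrightarrow> (\<Sum>i\<in>UNIV. \<Sum>j\<in>UNIV. v$i * S$i$j * v$j) > 0)"

definition Sym2 :: "cmat2 set" where
  "Sym2 = {Z. transpose Z = Z}"

definition siegel_H2 :: "cmat2 set" where
  "siegel_H2 = {Z. transpose Z = Z \<and> pos_def_real (Im_mat Z)}"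

definition cscale :: "complex \<Rightarrow> cmat2 \<Rightarrow> cmat2" where
  "cscale c Z = (\<chi> i j. c * Z$i$j)"

text \<open>Holomorphy on the Siegel upper half space (an open subset of the
  3-dimensional complex space of symmetric matrices): complex Frechet differentiability.\<close>

definition holomorphic_H2 :: "(cmat2 \<Rightarrow> complex) \<Rightarrow> bool" where
  "holomorphic_H2 F \<longleftrightarrow> (\<forall>Z\<in>siegel_H2. \<exists>D. (F has_derivative D) (at Z within Sym2) \<and>
       (\<forall>c V. V \<in> Sym2 \<longrightarrow> D (cscale c V) = c * D V))"

text \<open>An element (A,B,C,D) of Sp_4(Z) in block form; M^T J M = J written in blocks.\<close>

definition Sp4Z :: "(imat2 \<times> imat2 \<times> imat2 \<times> imat2) set" where
  "Sp4Z = {(A,B,C,D). transpose A ** C = transpose C ** A \<and>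
                      transpose B ** D = transpose D ** B \<and>
                      transpose A ** D - transpose C ** B = mat 1}"

definition Gamma0_2 :: "nat \<Rightarrow> (imat2 \<times> imat2 \<times> imat2 \<times> imat2) set" where
  "Gamma0_2 l = {(A,B,C,D) \<in> Sp4Z. \<forall>i j. int l dvd C$i$j}"

definition slash :: "nat \<Rightarrow> (imat2 \<times> imat2 \<times> imat2 \<times> imat2) \<Rightarrow> (cmat2 \<Rightarrow> complex) \<Rightarrow> cmat2 \<Rightarrow> complex" where
  "slash k M F Z = (case M of (A,B,C,D) \<Rightarrow>
     inverse (det (of_int_mat C ** Z + of_int_mat D) ^ k) *
     F ((of_int_mat A ** Z + of_int_mat B) ** matrix_inv (of_int_mat C ** Z + of_int_mat D)))"

definition E2 :: "imat2 \<times> imat2 \<times> imat2 \<times> imat2" where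
  "E2 = (0, mat 1, - mat 1, 0)"

definition diag2 :: "complex \<Rightarrow> complex \<Rightarrow> cmat2" where
  "diag2 a b = (\<chi> i j. if i = j then (if i = 1 then a else b) else 0)"

text \<open>Siegel cusp forms of degree 2, weight k, level Gamma_0^(2)(l), character chi(M) = chi~(det D).
  Cusp condition: Siegel Phi operator of f|_k M vanishes for every M in Sp_4(Z).\<close>

definition siegel_cusp_form :: "nat \<Rightarrow> nat \<Rightarrow> (int \<Rightarrow> complex) \<Rightarrow> (cmat2 \<Rightarrow> complex) \<Rightarrow> bool" where
  "siegel_cusp_form l k chi F \<longleftrightarrow>
     holomorphic_H2 F \<and>
     (\<forall>M\<in>Gamma0_2 l. \<forall>Z\<in>siegel_H2. slash k M F Z = chi (det (snd (snd (snd M)))) * F Z) \<and>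
     (\<forall>M\<in>Sp4Z. \<forall>\<tau>. Im \<tau> > 0 \<longrightarrow>
        ((\<lambda>t::real. slash k M F (diag2 \<tau> (\<i> * of_real t))) \<longlongrightarrow> 0) at_top)"

definition phi_star :: "imat2 \<Rightarrow> (cmat2 \<Rightarrow> complex) \<Rightarrow> complex \<Rightarrow> complex" where
  "phi_star s F \<tau> = F (\<chi> i j. of_int (s$i$j) * \<tau>)"

definition ell_slash :: "nat \<Rightarrow> real \<times> real \<times> real \<times> real \<Rightarrow> (complex \<Rightarrow> complex) \<Rightarrow> complex \<Rightarrow> complex" where
  "ell_slash k \<gamma> g \<tau> = (case \<gamma> of (a,b,c,d) \<Rightarrow>
     complex_of_real (a*d - b*c) ^ k * inverse ((of_real c * \<tau> + of_real d) ^ (2*k)) *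
     g ((of_real a * \<tau> + of_real b) / (of_real c * \<tau> + of_real d)))"

end

theory Submission
  imports Defs
begin

definition mk2 :: "'a \<Rightarrow> 'a \<Rightarrow> 'a \<Rightarrow> 'a \<Rightarrow> 'a^2^2" where
  "mk2 a b c d = (\<chi> i j. if i = 1 then (if j = 1 then a else b) else (if j = 1 then c else d))"

lemma mk2_nth[simp]: "mk2 a b c d $ 1 $ 1 = a" "mk2 a b c d $ 1 $ 2 = b"
  "mk2 a b c d $ 2 $ 1 = c" "mk2 a b c d $ 2 $ 2 = d"
  by (simp_all add: mk2_def)

lemma mk2_eq_iff: "(mk2 a b c d = mk2 a' b' c' d') \<longleftrightarrow> a = a' \<and> b = b' \<and> c = c' \<and> d = d'"
  by (auto simp: vec_eq_iff forall_2)

lemma eq_mk2: "X = mk2 a b c d \<longleftrightarrow> X$1$1 = a \<and> X$1$2 = b \<and> X$2$1 = c \<and> X$2$2 = d"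
  by (auto simp: vec_eq_iff forall_2)

lemma mk2_mult: "mk2 a b c d ** mk2 e f g h = mk2 (a*e+b*g) (a*f+b*h) (c*e+d*g) (c*f+(d::'a::semiring_1)*h)"
  by (simp add: eq_mk2 matrix_matrix_mult_def sum_2)

lemma mk2_add: "mk2 a b c d + mk2 e f g h = mk2 (a+e) (b+f) (c+g) (d+h)"
  by (simp add: eq_mk2)

lemma mk2_diff: "mk2 a b c d - mk2 e f g h = mk2 (a-e) (b-f) (c-g) ((d::'a::ab_group_add)-h)"
  by (simp add: eq_mk2)

lemma mk2_uminus: "- mk2 a b c d = mk2 (-a) (-b) (-c) (-(d::'a::ab_group_add))"
  by (simp add: eq_mk2)

lemma mat1_mk2: "(mat 1 :: 'a::zero_neq_one^2^2) = mk2 1 0 0 1"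
  by (simp add: eq_mk2 mat_def)

lemma zero_mk2: "(0 :: 'a::zero^2^2) = mk2 0 0 0 0"
  by (simp add: eq_mk2)

lemma transpose_mk2: "transpose (mk2 a b c d) = mk2 a c b d"
  by (simp add: eq_mk2 transpose_def)

lemma det_mk2: "det (mk2 a b c (d::'a::comm_ring_1)) = a*d - b*c"
  by (simp add: det_2)

lemma of_int_mat_mk2: "of_int_mat (mk2 a b c d) = mk2 (of_int a) (of_int b) (of_int c) (of_int d)"
  by (simp add: eq_mk2 of_int_mat_def)

lemma matrix_inv_eq:
  fixes X Y :: "'a::comm_ring_1^'n^'n"
  assumes "X ** Y = mat 1" "Y ** X = mat 1"
  shows "matrix_inv X = Y"
proof -
  have ex: "\<exists>A'. X ** A' = mat 1 \<and> A' ** X = mat 1" using assms by blast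
  define Z where "Z = matrix_inv X"
  have Z: "X ** Z = mat 1 \<and> Z ** X = mat 1" unfolding Z_def matrix_inv_def by (rule someI_ex[OF ex])
  have "Y = Y ** (X ** Z)" using Z by (simp add: matrix_mul_rid)
  also have "\<dots> = (Y ** X) ** Z" by (simp add: matrix_mul_assoc)
  also have "\<dots> = Z" using assms by (simp add: matrix_mul_lid)
  finally show ?thesis unfolding Z_def by simp
qed

lemma inv_mk2:
  fixes a b c d :: complex
  assumes "a*d - b*c \<noteq> 0"
  shows "matrix_inv (mk2 a b c d) = mk2 (d/(a*d-b*c)) (-b/(a*d-b*c)) (-c/(a*d-b*c)) (a/(a*d-b*c))"
proof -
  have h: "(a*d-b*c) * inverse (a*d-b*c) = 1" using assms by simp
  show ?thesis
  apply (rule matrix_inv_eq)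
  using h by (simp_all add: mk2_mult mat1_mk2 mk2_eq_iff divide_inverse; algebra)+
qed

lemma pos_def_real_mk2:
  fixes p q r :: real
  assumes "p > 0" "p*r - q*q > 0"
  shows "pos_def_real (mk2 p q q r)"
  unfolding pos_def_real_def
proof (intro allI impI)
  fix v :: "real^2" assume "v \<noteq> 0"
  then have nz: "v$1 \<noteq> 0 \<or> v$2 \<noteq> 0" by (auto simp: vec_eq_iff forall_2)
  have e: "v \<bullet> (mk2 p q q r *v v) = p*(v$1)^2 + 2*q* v$1* v$2 + r*(v$2)^2"
    by (simp add: inner_vec_def matrix_vector_mult_def sum_2 power2_eq_square algebra_simps)
  have "p * (p*(v$1)^2 + 2*q* v$1* v$2 + r*(v$2)^2) = (p* v$1 + q* v$2)^2 + (p*r-q*q)*(v$2)^2"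
    by (simp add: power2_eq_square algebra_simps)
  moreover have "(p* v$1 + q* v$2)^2 + (p*r-q*q)*(v$2)^2 > 0"
  proof (cases "v$2 = 0")
    case True then have "v$1 \<noteq> 0" using nz by simp
    then show ?thesis using True assms by simp
  next
    case False then show ?thesis using assms
      by (simp add: add_nonneg_pos)
  qed
  ultimately have "p * (v \<bullet> (mk2 p q q r *v v)) > 0" using e by simp
  then show "v \<bullet> (mk2 p q q r *v v) > 0" using assms(1)
    by (simp add: zero_less_mult_iff)
qed

lemma Im_ofint_div: "Im (of_int n * z / of_int m) = of_int n * Im z / of_int m"
proof -
  have "of_int n * z / of_int m = complex_of_real (of_int n / of_int m) * z" by simp
  then show ?thesis by simp
qed
lemma Im_ofint_div': "Im (- of_int n * z / of_int m) = - of_int n * Im z / of_int m"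
proof -
  have "- of_int n * z / of_int m = complex_of_real (- of_int n / of_int m) * z" by simp
  then show ?thesis by simp
qed
lemma MG_lemma:
  assumes uni: "int l * x * w - y * (a*d-b*b) * z = 1"
  shows "(mk2 (y*a) (y*b) (y*b) (y*d), mk2 (-x) 0 0 (-x), mk2 (int l*w) 0 0 (int l*w),
     mk2 (-z*d) (z*b) (z*b) (-z*a)) \<in> Gamma0_2 l"
  unfolding Gamma0_2_def Sp4Z_def
  apply (simp add: transpose_mk2 mk2_mult mk2_diff mat1_mk2 mk2_eq_iff forall_2)
  using uni apply (simp add: algebra_simps)
  done

theorem proposition4p3:
  fixes l k :: nat and chi :: "int \<Rightarrow> complex" and f :: "complex^2^2 \<Rightarrow> complex"
    and s :: "int^2^2" and x y z w :: int and \<tau> :: complex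
  assumes "prime l"
    and "dirichlet_char l chi"
    and "siegel_cusp_form l k chi f"
    and "transpose s = s" and "pos_def_int s"
    and "\<not> int l dvd det s"
    and "(int l * x) * (int l * w) - y * (int l * det s * z) = int l"
    and "Im \<tau> > 0"
  shows "ell_slash k (of_int (int l * x), of_int y, of_int (int l * det s * z), of_int (int l * w))
            (phi_star s f) \<tau>
         = of_nat l ^ k * chi (det s * z^2) * phi_star (\<chi> i j. int l * s$i$j) (slash k E2 f) \<tau>"
proof -
  define a where "a = s$1$1"
  define b where "b = s$1$2"
  define d where "d = s$2$2"
  have "s$2$1 = b"
  proof -
    have "transpose s $1$2 = s$1$2" using assms(4) by simp
    then show ?thesis by (simp add: transpose_def b_def)
  qed
  then have s_eq: "s = mk2 a b b d" by (simp add: eq_mk2 a_def b_def d_def)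
  have dets: "det s = a*d - b*b" by (simp add: s_eq det_mk2)
  have ps: "\<And>v::int^2. v \<noteq> 0 \<Longrightarrow> a*(v$1)^2 + 2*b*(v$1)*(v$2) + d*(v$2)^2 > 0"
  proof -
    fix v :: "int^2" assume "v \<noteq> 0"
    then have "(\<Sum>i\<in>UNIV. \<Sum>j\<in>UNIV. v$i * s$i$j * v$j) > 0" using assms(5) pos_def_int_def by blast
    then show "a*(v$1)^2 + 2*b*(v$1)*(v$2) + d*(v$2)^2 > 0"
      by (simp add: s_eq sum_2 power2_eq_square algebra_simps)
  qed
  have "a*1^2 + 2*b*1*0 + d*0^2 > 0"
    using ps[of "\<chi> i. if i = 1 then 1 else 0"] by (simp add: vec_eq_iff)
  then have apos: "a > 0" by simp
  have "a*(-b)^2 + 2*b*(-b)*a + d*a^2 > 0"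
    using ps[of "\<chi> i. if i = 1 then -b else a"] apos by (simp add: vec_eq_iff forall_2)
  then have "a * (a*d - b*b) > 0" by (simp add: power2_eq_square algebra_simps)
  then have lpos: "a*d - b*b > 0" using apos by (simp add: zero_less_mult_iff)
  have l0: "l > 0" using assms(1) prime_gt_0_nat by blast
  have "int l * (int l * x * w - y * det s * z) = int l * 1" using assms(7) by (simp add: algebra_simps)
  then have uni: "int l * x * w - y * (a*d-b*b) * z = 1" using l0 dets by simp
  have "a*0^2 + 2*b*0*1 + d*1^2 > 0"
    using ps[of "\<chi> i. if i = 1 then 0 else 1"] by (simp add: vec_eq_iff forall_2)
  then have dpos: "d > 0" by simp
  define L :: complex where "L = of_nat l"
  define lp :: complex where "lp = of_int (a*d-b*b)"
  define \<sigma> where "\<sigma> = -1/(L*\<tau>)"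
  have L0: "L \<noteq> 0" using l0 by (simp add: L_def)
  have lp0: "lp \<noteq> 0" unfolding lp_def of_int_eq_0_iff using lpos by simp
  have t0: "\<tau> \<noteq> 0" using assms(8) by auto
  have Imsig: "Im \<sigma> > 0"
  proof -
    have "Im \<sigma> = real l * Im \<tau> / (cmod (L*\<tau>))^2"
      by (simp add: \<sigma>_def Im_divide' L_def)
    moreover have "L*\<tau> \<noteq> 0" using L0 t0 by simp
    ultimately show ?thesis using l0 assms(8) by simp
  qed
  define Z0 where "Z0 = mk2 (of_int d*\<sigma>/lp) (-of_int b*\<sigma>/lp) (-of_int b*\<sigma>/lp) (of_int a*\<sigma>/lp)"
  have Z0H: "Z0 \<in> siegel_H2"
  proof -
    define t where "t = Im \<sigma> / real_of_int (a*d-b*b)"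
    have lposr: "real_of_int (a*d-b*b) > 0" using lpos by (simp only: of_int_0_less_iff)
    have lposr2: "real_of_int a * real_of_int d - real_of_int b * real_of_int b > 0"
      using lposr by (metis of_int_diff of_int_mult)
    have tpos: "t > 0" unfolding t_def using Imsig lposr by (rule divide_pos_pos)
    have "Im_mat Z0 = mk2 (d*t) (-b*t) (-b*t) (a*t)"
      unfolding eq_mk2 Im_mat_def Z0_def t_def lp_def
      by (simp only: vec_lambda_beta mk2_nth Im_ofint_div Im_ofint_div') simp
    moreover have "pos_def_real (mk2 (d*t) (-b*t) (-b*t) (a*t))"
    proof (rule pos_def_real_mk2)
      show "d*t > 0" using dpos tpos by simp
      have "(d*t)*(a*t) - (-b*t)*(-b*t) = t*t*(a*d-b*b)" by (simp add: algebra_simps)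
      also have "\<dots> > 0" using tpos lposr2 by simp
      finally show "(d*t)*(a*t) - (-b*t)*(-b*t) > 0" .
    qed
    moreover have "transpose Z0 = Z0" by (simp add: Z0_def transpose_mk2)
    ultimately show ?thesis by (simp add: siegel_H2_def)
  qed
  define M where "M = (mk2 (y*a) (y*b) (y*b) (y*d), mk2 (-x) 0 0 (-x), mk2 (int l*w) 0 0 (int l*w),
     mk2 (-z*d) (z*b) (z*b) (-z*a))"
  have MG: "M \<in> Gamma0_2 l"
    unfolding M_def using uni by (rule MG_lemma)
  define ac :: complex where "ac = of_int a"
  define bc :: complex where "bc = of_int b"
  define dc :: complex where "dc = of_int d"
  define xc :: complex where "xc = of_int x"
  define yc :: complex where "yc = of_int y"
  define zc :: complex where "zc = of_int z"
  define wc :: complex where "wc = of_int w"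
  have lp_eq: "lp = ac*dc - bc*bc" by (simp add: lp_def ac_def bc_def dc_def)
  define den where "den = L*lp*zc*\<tau> + L*wc"
  define mu where "mu = L*wc*\<sigma>/lp - zc"
  have Lst: "L*\<sigma>*\<tau> = -1" using L0 t0 by (simp add: \<sigma>_def field_simps)
  have den_eq: "den = -(L*\<tau>*mu*lp)"
    using Lst lp0 unfolding den_def mu_def by (simp add: field_simps) algebra
  have den0: "den \<noteq> 0"
  proof (cases "z = 0")
    case True
    then have "int l * x * w = 1" using uni by simp
    then have "w \<noteq> 0" by auto
    then show ?thesis using True L0 by (simp add: den_def zc_def wc_def)
  next
    case False
    have "Im den = real l * of_int (a*d-b*b) * of_int z * Im \<tau>"
      by (simp add: den_def L_def lp_def zc_def wc_def)
    moreover have "real l * of_int (a*d-b*b) * of_int z * Im \<tau> \<noteq> 0"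
    proof -
      have "real_of_int (a*d-b*b) \<noteq> 0" by (simp only: of_int_eq_0_iff) (use lpos in simp)
      then show ?thesis using False l0 assms(8) by (simp del: of_int_diff of_int_mult)
    qed
    ultimately show ?thesis by auto
  qed
  have mu0: "mu \<noteq> 0" using den0 den_eq by auto
  have ilp: "lp * inverse lp = 1" using lp0 by simp
  have imu: "mu * inverse mu = 1" using mu0 by simp
  have iden: "den * inverse den = 1" using den0 by simp
  have Z0e: "Z0 = mk2 (dc*\<sigma>*inverse lp) (-bc*\<sigma>*inverse lp) (-bc*\<sigma>*inverse lp) (ac*\<sigma>*inverse lp)"
    by (simp add: Z0_def ac_def bc_def dc_def divide_inverse)
  have CZD: "of_int_mat (mk2 (int l*w) 0 0 (int l*w)) ** Z0 + of_int_mat (mk2 (-z*d) (z*b) (z*b) (-z*a))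
     = mk2 (mu*dc) (-mu*bc) (-mu*bc) (mu*ac)"
    unfolding Z0e of_int_mat_mk2 mk2_mult mk2_add mk2_eq_iff
    by (simp add: mu_def L_def ac_def bc_def dc_def zc_def wc_def divide_inverse algebra_simps)
  have AZB: "of_int_mat (mk2 (y*a) (y*b) (y*b) (y*d)) ** Z0 + of_int_mat (mk2 (-x) 0 0 (-x))
     = mk2 (yc*\<sigma> - xc) 0 0 (yc*\<sigma> - xc)"
    unfolding Z0e of_int_mat_mk2 mk2_mult mk2_add mk2_eq_iff
    apply (simp add: ac_def[symmetric] bc_def[symmetric] dc_def[symmetric] xc_def[symmetric] yc_def[symmetric])
    using ilp lp_eq by algebra+
  have INV: "matrix_inv (mk2 (mu*dc) (-mu*bc) (-mu*bc) (mu*ac)) =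
      mk2 (ac*inverse mu*inverse lp) (bc*inverse mu*inverse lp) (bc*inverse mu*inverse lp) (dc*inverse mu*inverse lp)"
    apply (rule matrix_inv_eq)
    unfolding mk2_mult mat1_mk2 mk2_eq_iff
    using ilp imu lp_eq by algebra+
  define \<tau>' where "\<tau>' = (L*xc*\<tau> + yc) / den"
  have tau': "(yc*\<sigma> - xc) * (inverse mu * inverse lp) = \<tau>'"
    unfolding \<tau>'_def divide_inverse using ilp imu iden Lst den_eq
    by algebra
  have Stau: "(\<chi> i j. of_int (s$i$j) * \<tau>') = mk2 (\<tau>'*ac) (\<tau>'*bc) (\<tau>'*bc) (\<tau>'*dc)"
    by (simp add: eq_mk2 s_eq ac_def bc_def dc_def)
  have prodM: "(mk2 (yc*\<sigma> - xc) 0 0 (yc*\<sigma> - xc)) ** mk2 (ac*inverse mu*inverse lp) (bc*inverse mu*inverse lp) (bc*inverse mu*inverse lp) (dc*inverse mu*inverse lp)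
     = mk2 (\<tau>'*ac) (\<tau>'*bc) (\<tau>'*bc) (\<tau>'*dc)"
    unfolding mk2_mult mk2_eq_iff using tau' by (simp add: algebra_simps)
  have detCZD: "det (mk2 (mu*dc) (-mu*bc) (-mu*bc) (mu*ac)) = mu^2 * lp"
    by (simp add: det_mk2 lp_eq power2_eq_square algebra_simps)
  have detD: "det (mk2 (-z*d) (z*b) (z*b) (-z*a)) = det s * z^2"
    by (simp add: det_mk2 dets power2_eq_square algebra_simps)
  have cusp: "slash k M f Z0 = chi (det s * z^2) * f Z0"
    using assms(3) MG Z0H detD unfolding siegel_cusp_form_def M_def by auto
  have slM: "slash k M f Z0 = inverse ((mu^2*lp)^k) * f (mk2 (\<tau>'*ac) (\<tau>'*bc) (\<tau>'*bc) (\<tau>'*dc))"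
    unfolding slash_def M_def using CZD AZB INV prodM detCZD by simp
  have fS: "f (mk2 (\<tau>'*ac) (\<tau>'*bc) (\<tau>'*bc) (\<tau>'*dc)) = (mu^2*lp)^k * chi (det s * z^2) * f Z0"
    using cusp slM mu0 lp0 by (simp add: field_simps)
  define X where "X = mk2 (L*ac*\<tau>) (L*bc*\<tau>) (L*bc*\<tau>) (L*dc*\<tau>)"
  have Xe: "(\<chi> i j. of_int (int l * s$i$j) * \<tau>) = X"
    by (simp add: X_def eq_mk2 s_eq L_def ac_def bc_def dc_def)
  have om1: "of_int_mat (- mat 1) = mk2 (-1) 0 0 (-1)"
    by (simp add: mat1_mk2 mk2_uminus of_int_mat_mk2)
  have om0: "of_int_mat 0 = mk2 0 0 0 0"
    by (simp add: zero_mk2 of_int_mat_mk2)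
  have om1': "of_int_mat (mat 1) = mk2 1 0 0 1"
    by (simp add: mat1_mk2 of_int_mat_mk2)
  have CX: "mk2 (-1) 0 0 (-1) ** X + mk2 0 0 0 0 = mk2 (-(L*ac*\<tau>)) (-(L*bc*\<tau>)) (-(L*bc*\<tau>)) (-(L*dc*\<tau>))"
    by (simp add: X_def mk2_mult mk2_add)
  have AX: "mk2 0 0 0 0 ** X + mk2 1 0 0 1 = (mat 1 :: complex^2^2)"
    by (simp add: X_def mk2_mult mk2_add mat1_mk2)
  have INV2: "matrix_inv (mk2 (-(L*ac*\<tau>)) (-(L*bc*\<tau>)) (-(L*bc*\<tau>)) (-(L*dc*\<tau>))) = Z0"
    unfolding Z0e
    apply (rule matrix_inv_eq)
    unfolding mk2_mult mat1_mk2 mk2_eq_iff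
    using ilp Lst lp_eq by algebra+
  have detX: "det (mk2 (-(L*ac*\<tau>)) (-(L*bc*\<tau>)) (-(L*bc*\<tau>)) (-(L*dc*\<tau>))) = L^2*\<tau>^2*lp"
    by (simp add: det_mk2 lp_eq power2_eq_square algebra_simps)
  have RHS: "phi_star (\<chi> i j. int l * s$i$j) (slash k E2 f) \<tau> = inverse ((L^2*\<tau>^2*lp)^k) * f Z0"
  proof -
    have "phi_star (\<chi> i j. int l * s$i$j) (slash k E2 f) \<tau> = slash k E2 f X"
      unfolding phi_star_def Xe[symmetric] by simp
    also have "\<dots> = inverse ((L^2*\<tau>^2*lp)^k) * f Z0"
      unfolding slash_def E2_def prod.case om1 om0 om1' CX AX matrix_mul_lid INV2 detX ..
    finally show ?thesis .
  qed
  have dr: "real_of_int (int l * x) * real_of_int (int l * w) - real_of_int y * real_of_int (int l * det s * z) = real l"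
    by (metis assms(7) of_int_mult of_int_diff of_int_of_nat_eq)
  have dn: "complex_of_real (real_of_int (int l * det s * z)) * \<tau> + complex_of_real (real_of_int (int l * w)) = den"
    by (simp add: den_def L_def lp_def dets zc_def wc_def)
  have nm: "complex_of_real (real_of_int (int l * x)) * \<tau> + complex_of_real (real_of_int y) = L*xc*\<tau> + yc"
    by (simp add: L_def xc_def yc_def)
  have LHS: "ell_slash k (of_int (int l * x), of_int y, of_int (int l * det s * z), of_int (int l * w))
            (phi_star s f) \<tau> = L^k * inverse (den^(2*k)) * f (mk2 (\<tau>'*ac) (\<tau>'*bc) (\<tau>'*bc) (\<tau>'*dc))"
    unfolding ell_slash_def prod.case dr dn nm phi_star_def \<tau>'_def[symmetric] Stau
    by (simp add: L_def)
  have key: "inverse (den^2) * (mu^2*lp) = inverse (L^2*\<tau>^2*lp)"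
    using den_eq den0 L0 t0 lp0 mu0 by (simp add: field_simps power2_eq_square)
  have key2: "inverse (den^(2*k)) * (mu^2*lp)^k = inverse ((L^2*\<tau>^2*lp)^k)"
  proof -
    have "inverse (den^(2*k)) * (mu^2*lp)^k = (inverse (den^2) * (mu^2*lp))^k"
      by (simp add: power_mult power_mult_distrib power_inverse)
    also have "\<dots> = (inverse (L^2*\<tau>^2*lp))^k" unfolding key ..
    also have "\<dots> = inverse ((L^2*\<tau>^2*lp)^k)" by (rule power_inverse)
    finally show ?thesis .
  qed
  show ?thesis
    unfolding LHS RHS fS
  proof -
    have "L ^ k * inverse (den ^ (2 * k)) * ((mu\<^sup>2 * lp) ^ k * chi (det s * z\<^sup>2) * f Z0)
      = L^k * chi (det s * z\<^sup>2) * ((inverse (den^(2*k)) * (mu^2*lp)^k) * f Z0)" by (simp add: algebra_simps)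
    also have "\<dots> = of_nat l ^ k * chi (det s * z\<^sup>2) * (inverse ((L\<^sup>2 * \<tau>\<^sup>2 * lp) ^ k) * f Z0)"
      unfolding key2 by (simp add: L_def)
    finally show "L ^ k * inverse (den ^ (2 * k)) * ((mu\<^sup>2 * lp) ^ k * chi (det s * z\<^sup>2) * f Z0)
      = of_nat l ^ k * chi (det s * z\<^sup>2) * (inverse ((L\<^sup>2 * \<tau>\<^sup>2 * lp) ^ k) * f Z0)" .
  qed
qed

end
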